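(* Let $B_1,B_2$ be compact curves of genus at least two, $g$ the genus of $B_2$, and let $\mathcal A=(D_1\cup\dots\cup D_{m+1},d,\{(t_i,r_i,n_i)\}_{i=1}^{m+1})$ be a simple Galois admissible configuration for $B_1\times B_2$ with $m\le4(g-1)$. Let $\mathcal A'=(D_1\cup\dots\cup D_m,d,\{(t_i,r_i,n_i)\}_{i=1}^{m})$ be obtained by omitting the last component. Then $\nu(\mathcal A')<\nu(\mathcal A)$.
   Context: A simple Galois admissible configuration for $B_1\times B_2$ consists of: pairwise disjoint curves $D_1,\dots,D_k\subset B_1\times B_2$, each the graph of an étale map $B_1\to B_2$; a positive integer $d$; and for each $i$ positive integers $t_i,n_i$ and $r_i\ge2$ with $d=t_in_ir_i$. Its abstract slope is $$\nu(\mathcal A)=2+\frac{-\sum_{i=1}^k t_in_i\frac{(r_i-1)(r_i+1)}{r_i}e(D_i)}{d\,e(B_1\times B_2)-\sum_{i=1}^k t_in_i(r_i-1)e(D_i)},$$ where $e$ denotes topological Euler characteristic; equivalently $\nu(\mathcal A)=2+\dfrac{1-\frac1k\sum_i r_i^{-2}}{\frac{2g-2}{k}+1-\frac1k\sum_i r_i^{-1}}$ with $g$ the genus of $B_2$. *)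

theory Defs
  imports Complex_Main
begin

definition euler_curve :: "nat \<Rightarrow> real" where
  "euler_curve g = 2 - 2 * real g"

text \<open>Numerical data of a simple Galois admissible configuration for B1 x B2,
  where B1, B2 have genera g1, g2: components D_0, ..., D_(k-1), each the graph of an
  etale map B1 -> B2 (hence isomorphic to B1, so e(D_i) = e(B1)), and
  e(B1 x B2) = e(B1) e(B2).\<close>
definition sga_config ::
  "nat \<Rightarrow> nat \<Rightarrow> nat \<Rightarrow> nat \<Rightarrow> (nat \<Rightarrow> nat) \<Rightarrow> (nat \<Rightarrow> nat) \<Rightarrow> (nat \<Rightarrow> nat) \<Rightarrow> bool" where
  "sga_config g1 g2 k d t n r \<longleftrightarrow>
     d > 0 \<and>
     (\<forall>i<k. t i > 0 \<and> n i > 0 \<and> r i \<ge> 2 \<and> d = t i * n i * r i) \<and>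
     (k > 0 \<longrightarrow> (\<exists>\<delta>::nat. \<delta> > 0 \<and> real g1 - 1 = real \<delta> * (real g2 - 1)))"

text \<open>Abstract slope nu(A), with e(D_i) = e(B1) and e(B1 x B2) = e(B1) e(B2).\<close>
definition abstract_slope ::
  "nat \<Rightarrow> nat \<Rightarrow> nat \<Rightarrow> nat \<Rightarrow> (nat \<Rightarrow> nat) \<Rightarrow> (nat \<Rightarrow> nat) \<Rightarrow> (nat \<Rightarrow> nat) \<Rightarrow> real" where
  "abstract_slope g1 g2 k d t n r =
     2 + (- (\<Sum>i<k. real (t i) * real (n i)
                     * ((real (r i) - 1) * (real (r i) + 1) / real (r i)) * euler_curve g1))
       / (real d * (euler_curve g1 * euler_curve g2)
          - (\<Sum>i<k. real (t i) * real (n i) * (real (r i) - 1) * euler_curve g1))"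

end

theory Submission
  imports Defs
begin

lemma slope_form:
  fixes g1 g2 k d :: nat and t n r :: "nat \<Rightarrow> nat"
  assumes "g1 \<ge> 2"
  shows "abstract_slope g1 g2 k d t n r =
    2 + (\<Sum>i<k. real (t i) * real (n i) * ((real (r i) - 1) * (real (r i) + 1) / real (r i)))
      / (real d * (2 * real g2 - 2) + (\<Sum>i<k. real (t i) * real (n i) * (real (r i) - 1)))"
proof -
  define E where "E = euler_curve g1"
  have E: "E < 0" using assms by (simp add: E_def euler_curve_def)
  define SA where "SA = (\<Sum>i<k. real (t i) * real (n i) * ((real (r i) - 1) * (real (r i) + 1) / real (r i)))"
  define SB where "SB = (\<Sum>i<k. real (t i) * real (n i) * (real (r i) - 1))"
  have 1: "(\<Sum>i<k. real (t i) * real (n i) * ((real (r i) - 1) * (real (r i) + 1) / real (r i)) * E) = SA * E"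
    unfolding SA_def by (simp add: sum_distrib_right)
  have 2: "(\<Sum>i<k. real (t i) * real (n i) * (real (r i) - 1) * E) = SB * E"
    unfolding SB_def by (simp add: sum_distrib_right)
  have "abstract_slope g1 g2 k d t n r = 2 + (- (SA * E)) / (real d * (E * (2 - 2 * real g2)) - SB * E)"
    unfolding abstract_slope_def E_def[symmetric] 1 2
    by (simp add: euler_curve_def)
  also have "(- (SA * E)) / (real d * (E * (2 - 2 * real g2)) - SB * E)
      = ((-E) * SA) / ((-E) * (real d * (2 * real g2 - 2) + SB))"
    by (simp add: algebra_simps)
  also have "\<dots> = SA / (real d * (2 * real g2 - 2) + SB)"
    using E by simp
  finally show ?thesis unfolding SA_def SB_def .
qed

theorem lemma5p7:
  fixes g1 g2 m d :: nat and t n r :: "nat \<Rightarrow> nat"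
  assumes "g1 \<ge> 2" and "g2 \<ge> 2"
    and "sga_config g1 g2 (m + 1) d t n r"
    and "real m \<le> 4 * (real g2 - 1)"
  shows "abstract_slope g1 g2 m d t n r < abstract_slope g1 g2 (m + 1) d t n r"
proof -
  define a where "a = (\<lambda>i. real (t i) * real (n i) * ((real (r i) - 1) * (real (r i) + 1) / real (r i)))"
  define b where "b = (\<lambda>i. real (t i) * real (n i) * (real (r i) - 1))"
  define G where "G = real d * (2 * real g2 - 2)"
  have cfg: "d > 0" "\<And>i. i < m + 1 \<Longrightarrow> t i > 0 \<and> n i > 0 \<and> r i \<ge> 2 \<and> d = t i * n i * r i"
    using assms(3) unfolding sga_config_def by auto
  have G: "G > 0" using cfg(1) assms(2) unfolding G_def by simp
  have ab: "a i - b i \<le> real d / 4 \<and> 0 < b i \<and> b i \<le> a i" if "i < m + 1" for i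
  proof -
    from cfg(2)[OF that] have tp: "t i > 0" and np: "n i > 0" and rp: "r i \<ge> 2" and dd: "d = t i * n i * r i" by auto
    define T where "T = real (t i) * real (n i)"
    define R where "R = real (r i)"
    have T: "T > 0" using tp np by (simp add: T_def)
    have R: "R \<ge> 2" using rp by (simp add: R_def)
    have dR: "real d = T * R" using dd by (simp add: T_def R_def)
    have e1: "a i - b i = T * ((R - 1) / R)"
      unfolding a_def b_def T_def[symmetric] R_def[symmetric] using R by (simp add: field_simps)
    have sq: "0 \<le> (R - 2) * (R - 2)" by simp
    have "R * 4 \<le> R * R + 4" using sq by (simp add: algebra_simps)
    hence "(R - 1) / R \<le> R / 4" using R by (simp add: field_simps)
    hence "T * ((R - 1) / R) \<le> T * (R / 4)" using T by (intro mult_left_mono) auto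
    hence "a i - b i \<le> real d / 4" using e1 dR by simp
    moreover have "b i > 0" unfolding b_def T_def[symmetric] R_def[symmetric] using T R by simp
    moreover have "a i - b i \<ge> 0" using e1 T R by simp
    ultimately show ?thesis by simp
  qed
  have "(\<Sum>i<m. a i - b i) \<le> (\<Sum>i<m. real d / 4)"
    by (rule sum_mono) (use ab in auto)
  hence "(\<Sum>i<m. a i) - (\<Sum>i<m. b i) \<le> real m * real d / 4"
    by (simp add: sum_subtractf)
  also have "\<dots> \<le> (real g2 - 1) * real d"
  proof -
    have "real d * real m \<le> real d * (4 * (real g2 - 1))"
      using assms(4) by (intro mult_left_mono) auto
    thus ?thesis by (simp add: algebra_simps)
  qed
  also have "\<dots> < G" unfolding G_def using cfg(1) assms(2) by simp
  finally have key: "(\<Sum>i<m. a i) < G + (\<Sum>i<m. b i)" by simp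
  have Bpos: "(\<Sum>i<m. b i) \<ge> 0" proof (rule sum_nonneg)
    fix x assume "x \<in> {..<m}"
    hence "x < m + 1" by simp
    from ab[OF this] show "0 \<le> b x" by simp
  qed
  define A0 where "A0 = (\<Sum>i<m. a i)"
  define B0 where "B0 = (\<Sum>i<m. b i)"
  have am: "b m > 0" "b m \<le> a m" using ab[of m] by auto
  have D: "G + B0 > 0" using G Bpos by (simp add: B0_def)
  have "A0 * b m < (G + B0) * b m" using key am(1) by (simp add: A0_def B0_def)
  also have "\<dots> \<le> (G + B0) * a m" using D am by (simp add: mult_left_mono)
  finally have ineq: "A0 * b m < (G + B0) * a m" .
  have "A0 / (G + B0) < (A0 + a m) / (G + B0 + b m)"
  proof -
    have D2: "G + B0 + b m > 0" using D am(1) by simp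
    have "A0 * (G + B0 + b m) < (A0 + a m) * (G + B0)"
      using ineq by (simp add: algebra_simps)
    thus ?thesis using D D2 by (simp add: divide_less_eq less_divide_eq mult.commute)
  qed
  thus ?thesis
    unfolding slope_form[OF assms(1)] a_def[symmetric] b_def[symmetric] G_def[symmetric]
    by (simp add: A0_def B0_def add.assoc)
qed

end
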